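(* Let $G$ be a finite alphabet and $p:G\times G^{-\mathbf{N}^*}\to[0,1]$ a kernel. Let $\mathcal{G}$ be the oriented graph with vertex set $G$ and arc set $\mathcal{A}=\{(w,g)\in G^2:a_1(g|w)>0\}$. Suppose (i) $\sum_{n=1}^\infty\prod_{m=1}^n a_m=\infty$; (ii) $\mathcal{G}$ has a single irreducible class, which is aperiodic; (iii) for every $g\in G$ there exists $w\in G$ with $(w,g)\notin\mathcal{A}$. Then there exists (and one can construct) a backward coalescence time for the coupling function $\hat f$ defined below.
   Context: Histories $\mathbf{w}=(w_{-1},w_{-2},\dots)\in G^{-\mathbf{N}^*}$; the kernel $p(g|\mathbf{w})$ is measurable in $\mathbf{w}$ and sums to 1 over $g$. Admissible histories $\mathcal{H}$: a letter $g$ is forbidden if $p(g|\mathbf{w})=0$ for all $\mathbf{w}$; a word $(s_0,\dots,s_{-n})$ is forbidden if $(s_{-1},\dots,s_{-n})$ is forbidden or $p(s_0|\mathbf{w})=0$ for all histories beginning with $(s_{-1},\dots,s_{-n})$; $\mathbf{w}\in\mathcal{H}$ iff no initial word $(w_{-1},\dots,w_{-n})$ is forbidden. $a_0(g)=\inf\{p(g|\mathbf{z}):\mathbf{z}\in\mathcal{H}\}$; for $k\ge1$, $a_k(g|w_{-1},\dots,w_{-k})=\inf\{p(g|\mathbf{z}):\mathbf{z}\in\mathcal{H},(z_{-1},\dots,z_{-k})=(w_{-1},\dots,w_{-k})\}$ (so $a_1(g|w)=\inf\{p(g|\mathbf{z}):\mathbf{z}\in\mathcal{H},z_{-1}=w\}$);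 $b_k=a_k-a_{k-1}$ ($a_{-1}\equiv0$); $a_k(w_{-1},\dots,w_{-k})=\sum_ga_k(g|\cdot)$; $a_k=\inf_{\mathbf{w}\in\mathcal{H}}a_k(w_{-1},\dots,w_{-k})$. The maximal coupling function $f:[0,1)\times\mathcal{H}\to G$ partitions each $[a_{k-1}(w_{-1},\dots,w_{-k+1}),a_k(w_{-1},\dots,w_{-k}))$ into intervals $B_k(g|w_{-1},\dots,w_{-k})$ of length $b_k(g|\cdot)$ and sets $f(u|\mathbf{w})=g$ on $\bigcup_kB_k(g|\cdot)$. Modified function $\bar f:[0,1)\times\mathcal{H}\to G$: $\bar f(u|\mathbf{w})=f(u|\mathbf{w})$ for $u\ge a_1(w_{-1})$, while on $[0,a_1(w_{-1}))$ each $B_1(h|w_{-1})$ is replaced by a union of two disjoint intervals $B^1_1(h|w_{-1}),B^2_1(h|w_{-1})$ on which $\bar f(\cdot|\mathbf{w})=h$, with $|B^1_1(h|w_{-1})|+|B^2_1(h|w_{-1})|=|B_1(h|w_{-1})|=a_1(h|w_{-1})$ and $B^1_1(h|w_{-1})$ intersecting $[0,a_1)$; consequently the Markov kernel $\bar M(g|w)=|\{u\in[0,1):\bar f(a_1u|\mathbf{w})=g\}|$ ($\mathbf{w}\in\mathcal{H}$, $w_{-1}=w$) satisfies $\bar M(g|w)>0\iff a_1(g|w)>0$. $\hat f:[0,1)^{|G|+1}\times\mathcal{H}\to G$ is $\hat f(u^0;u^g,g\in G|\mathbf{w})=\bar f(u^0|\mathbf{w})$ if $u^0\ge a_1$, and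 $=\bar f(a_1u^{w_{-1}}|\mathbf{w})$ if $u^0<a_1$. It is a coupling function for $p$ in the sense that for a uniform random vector $V$ on $[0,1)^{|G|+1}$, $P(\hat f(V|\mathbf{w})=g)=p(g|\mathbf{w})$ for all $\mathbf{w}\in\mathcal{H}$. Iterates: $\hat f^{(1)}=\hat f$, $\hat f^{(n+1)}(v_n,\dots,v_0|\mathbf{w})=\hat f(v_n|\hat f^{(n)}(v_{n-1},\dots,v_0|\mathbf{w}),\dots,\hat f^{(1)}(v_0|\mathbf{w}),\mathbf{w})$. Let $\{V_i,i\in\mathbf{Z}\}$ be i.i.d. uniform on $[0,1)^{|G|+1}$, $\mathcal{F}^n_m=\sigma(V_i,m\le i\le n)$, and fix $\mathbf{g}\in\mathcal{H}$. A backward coalescence time for $\hat f$ is a measurable $\tau_0=\tau_0(V_0,V_{-1},\dots)$ with non-positive integer values such that (H1) $-\tau_0$ is an a.s. finite stopping time w.r.t. $\{\mathcal{F}^0_{-n}\}_{n\in\mathbf{N}}$; (H2) on $\{\tau_0=-l\}$, $\hat f^{(l+1)}(V_0,\dots,V_{-l}|\mathbf{w})=\hat f^{(l+1)}(V_0,\dots,V_{-l}|\mathbf{g})$ for all $\mathbf{w}\in\mathcal{H}$. "Single irreducible class" refers to the communicating-class structure of the directed graph $\mathcal{G}$ (as for the Markov chain with support graph $\mathcal{G}$). *)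

theory Defs
  imports "HOL-Probability.Probability"
begin

(* A history w = (w_{-1}, w_{-2}, ...) is represented as  w :: nat => 'g  with  w i = w_{-(i+1)}.
   A kernel p(g|w) is represented as  p g w. *)

type_synonym 'g hist = "nat \<Rightarrow> 'g"

(* Forbidden words.  The word (s_0, s_{-1}, ..., s_{-n}) is the list [s_0, s_{-1}, ..., s_{-n}]. *)
fun forbidden :: "('g \<Rightarrow> 'g hist \<Rightarrow> real) \<Rightarrow> 'g list \<Rightarrow> bool" where
  "forbidden p [] = False"
| "forbidden p [g] = (\<forall>w. p g w = 0)"
| "forbidden p (s0 # s1 # ss) =
     (forbidden p (s1 # ss) \<or>
      (\<forall>w. (\<forall>i < length (s1 # ss). w i = (s1 # ss) ! i) \<longrightarrow> p s0 w = 0))"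

definition admissible :: "('g \<Rightarrow> 'g hist \<Rightarrow> real) \<Rightarrow> 'g hist set" where
  "admissible p = {w. \<forall>n\<ge>1. \<not> forbidden p (map w [0..<n])}"

(* a_k(g | w_{-1},...,w_{-k}); only w 0 .. w (k-1) matter.  k = 0 gives a_0(g).
   Convention: the infimum over an empty set (a prefix not extendable to an admissible
   history) is 1, the top of [0,1]. *)
definition acond :: "('g \<Rightarrow> 'g hist \<Rightarrow> real) \<Rightarrow> nat \<Rightarrow> 'g \<Rightarrow> 'g hist \<Rightarrow> real" where
  "acond p k g w =
     (let S = {z \<in> admissible p. \<forall>i<k. z i = w i}
      in if S = {} then 1 else (INF z\<in>S. p g z))"

definition bcond :: "('g \<Rightarrow> 'g hist \<Rightarrow> real) \<Rightarrow> nat \<Rightarrow> 'g \<Rightarrow> 'g hist \<Rightarrow> real" where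
  "bcond p k g w = acond p k g w - (if k = 0 then 0 else acond p (k - 1) g w)"

definition atot :: "('g::finite \<Rightarrow> 'g hist \<Rightarrow> real) \<Rightarrow> nat \<Rightarrow> 'g hist \<Rightarrow> real" where
  "atot p k w = (\<Sum>g\<in>UNIV. acond p k g w)"

definition alow :: "('g::finite \<Rightarrow> 'g hist \<Rightarrow> real) \<Rightarrow> nat \<Rightarrow> 'g hist \<Rightarrow> real" where
  "alow p k w = (if k = 0 then 0 else atot p (k - 1) w)"

definition amin :: "('g::finite \<Rightarrow> 'g hist \<Rightarrow> real) \<Rightarrow> nat \<Rightarrow> real" where
  "amin p k = (INF w\<in>admissible p. atot p k w)"

definition arcs :: "('g \<Rightarrow> 'g hist \<Rightarrow> real) \<Rightarrow> ('g \<times> 'g) set" where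
  "arcs p = {(w, g). acond p 1 g (\<lambda>_. w) > 0}"

definition comm_class :: "('a \<times> 'a) set \<Rightarrow> 'a set \<Rightarrow> bool" where
  "comm_class A C \<longleftrightarrow> (\<exists>x. C = {y. (x, y) \<in> A\<^sup>* \<and> (y, x) \<in> A\<^sup>*})"

definition closed_set :: "('a \<times> 'a) set \<Rightarrow> 'a set \<Rightarrow> bool" where
  "closed_set A C \<longleftrightarrow> (\<forall>x\<in>C. \<forall>y. (x, y) \<in> A \<longrightarrow> y \<in> C)"

definition irreducible_class :: "('a \<times> 'a) set \<Rightarrow> 'a set \<Rightarrow> bool" where
  "irreducible_class A C \<longleftrightarrow> comm_class A C \<and> closed_set A C"

definition period :: "('a \<times> 'a) set \<Rightarrow> 'a \<Rightarrow> nat" where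
  "period A x = Gcd {n. n > 0 \<and> (x, x) \<in> A ^^ n}"

definition aperiodic_class :: "('a \<times> 'a) set \<Rightarrow> 'a set \<Rightarrow> bool" where
  "aperiodic_class A C \<longleftrightarrow> (\<forall>x\<in>C. period A x = 1)"

(* Requirements on the modified maximal coupling function fbar (called fb):
   (1) each fb(.|w) is Borel measurable and {u in [0,1). fb(u|w)=g} has length p(g|w)
       (so that fhat is a coupling function);
   (2) for k >= 2 (i.e. u >= a_1(w_{-1}), where fbar = f), [a_{k-1}(w),a_k(w)) is partitioned
       into intervals B_k(g|w_{-1..-k}) of length b_k(g|.), depending only on w_{-1..-k};
   (3) on [0, a_1(w_{-1})) the preimage of h is the union of two disjoint intervals
       B^1_1(h|w_{-1}), B^2_1(h|w_{-1}) of total length a_1(h|w_{-1}), B^1 intersecting [0,a_1). *)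
definition fbar_ok :: "('g::finite \<Rightarrow> 'g hist \<Rightarrow> real) \<Rightarrow> (real \<Rightarrow> 'g hist \<Rightarrow> 'g) \<Rightarrow> bool" where
  "fbar_ok p fb \<longleftrightarrow>
     (\<forall>w\<in>admissible p. \<forall>g. {u. fb u w = g} \<in> sets lborel)
   \<and> (\<forall>w\<in>admissible p. \<forall>g. measure lborel {u\<in>{0..<1}. fb u w = g} = p g w)
   \<and> (\<forall>k\<ge>2. \<forall>w\<in>admissible p. \<forall>g. \<exists>c d. c \<le> d \<and> d - c = bcond p k g w \<and>
          {u\<in>{alow p k w..<atot p k w}. fb u w = g} = {c..<d})
   \<and> (\<forall>k\<ge>2. \<forall>w\<in>admissible p. \<forall>w'\<in>admissible p. (\<forall>i<k. w i = w' i) \<longrightarrow>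
          (\<forall>u\<in>{alow p k w..<atot p k w}. fb u w = fb u w'))
   \<and> (\<exists>c1 d1 c2 d2 :: 'g \<Rightarrow> 'g \<Rightarrow> real. \<forall>w\<in>admissible p. \<forall>h.
          c1 h (w 0) \<le> d1 h (w 0) \<and> c2 h (w 0) \<le> d2 h (w 0)
        \<and> {c1 h (w 0)..<d1 h (w 0)} \<inter> {c2 h (w 0)..<d2 h (w 0)} = {}
        \<and> (d1 h (w 0) - c1 h (w 0)) + (d2 h (w 0) - c2 h (w 0)) = acond p 1 h w
        \<and> {u\<in>{0..<atot p 1 w}. fb u w = h} = {c1 h (w 0)..<d1 h (w 0)} \<union> {c2 h (w 0)..<d2 h (w 0)}
        \<and> (acond p 1 h w > 0 \<longrightarrow> {c1 h (w 0)..<d1 h (w 0)} \<inter> {0..<amin p 1} \<noteq> {}))"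

(* A vector v in [0,1)^{|G|+1}: v None = u^0, v (Some g) = u^g. *)
definition fhat :: "('g::finite \<Rightarrow> 'g hist \<Rightarrow> real) \<Rightarrow> (real \<Rightarrow> 'g hist \<Rightarrow> 'g)
                     \<Rightarrow> ('g option \<Rightarrow> real) \<Rightarrow> 'g hist \<Rightarrow> 'g" where
  "fhat p fb v w = (if amin p 1 \<le> v None then fb (v None) w else fb (amin p 1 * v (Some (w 0))) w)"

definition push :: "'g \<Rightarrow> 'g hist \<Rightarrow> 'g hist" where
  "push x w = (\<lambda>i. case i of 0 \<Rightarrow> x | Suc j \<Rightarrow> w j)"

(* traj vs w n = (fhat^{(n)}(v_{n-1},...,v_0|w), ..., fhat^{(1)}(v_0|w), w) where vs i = v_i *)
primrec traj :: "('g::finite \<Rightarrow> 'g hist \<Rightarrow> real) \<Rightarrow> (real \<Rightarrow> 'g hist \<Rightarrow> 'g)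
                  \<Rightarrow> (nat \<Rightarrow> 'g option \<Rightarrow> real) \<Rightarrow> 'g hist \<Rightarrow> nat \<Rightarrow> 'g hist" where
  "traj p fb vs w 0 = w"
| "traj p fb vs w (Suc n) = push (fhat p fb (vs n) (traj p fb vs w n)) (traj p fb vs w n)"

definition fhat_iter :: "('g::finite \<Rightarrow> 'g hist \<Rightarrow> real) \<Rightarrow> (real \<Rightarrow> 'g hist \<Rightarrow> 'g)
                  \<Rightarrow> nat \<Rightarrow> (nat \<Rightarrow> 'g option \<Rightarrow> real) \<Rightarrow> 'g hist \<Rightarrow> 'g" where
  "fhat_iter p fb n vs w = fhat p fb (vs (n - 1)) (traj p fb vs w (n - 1))"

definition Vmeas :: "('g::finite option \<Rightarrow> real) measure" where
  "Vmeas = PiM UNIV (\<lambda>_. uniform_measure lborel {0..<1::real})"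

(* Canonical space of (V_0, V_{-1}, V_{-2}, ...): omega j = V_{-j}, i.i.d. *)
definition Omega :: "(nat \<Rightarrow> 'g::finite option \<Rightarrow> real) measure" where
  "Omega = PiM UNIV (\<lambda>_. Vmeas)"

definition past_filt :: "nat \<Rightarrow> (nat \<Rightarrow> 'g::finite option \<Rightarrow> real) measure" where
  "past_filt n = vimage_algebra (space Omega) (\<lambda>\<omega>. restrict \<omega> {..n}) (PiM {..n} (\<lambda>_. Vmeas))"

(* T = -tau_0 (values in enat; finite almost surely). *)
definition backward_coalescence_time ::
  "('g::finite \<Rightarrow> 'g hist \<Rightarrow> real) \<Rightarrow> (real \<Rightarrow> 'g hist \<Rightarrow> 'g) \<Rightarrow> 'g hist
     \<Rightarrow> ((nat \<Rightarrow> 'g option \<Rightarrow> real) \<Rightarrow> enat) \<Rightarrow> bool" where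
  "backward_coalescence_time p fb gg T \<longleftrightarrow>
     (\<forall>n::nat. {\<omega> \<in> space Omega. T \<omega> \<le> enat n} \<in> sets (past_filt n))
   \<and> (AE \<omega> in Omega. T \<omega> \<noteq> \<infinity>)
   \<and> (\<forall>l::nat. \<forall>\<omega>\<in>space Omega. T \<omega> = enat l \<longrightarrow>
        (\<forall>w\<in>admissible p.
           fhat_iter p fb (Suc l) (\<lambda>i. \<omega> (l - i)) w = fhat_iter p fb (Suc l) (\<lambda>i. \<omega> (l - i)) gg))"

end

theory Submission imports Defs begin

definition box01 :: "('g option \<Rightarrow> real) set" where
  "box01 = {v. \<forall>c. 0 \<le> v c \<and> v c < 1}"

lemma semigroup_mult_closed:
  fixes S :: "nat set"
  assumes add: "\<And>x y. x \<in> S \<Longrightarrow> y \<in> S \<Longrightarrow> x + y \<in> S" and x: "x \<in> S"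
  shows "k \<ge> 1 \<Longrightarrow> k * x \<in> S"
proof (induction k rule: nat_induct_at_least)
  case base thus ?case using x by simp
next
  case (Suc n) thus ?case using add x by (simp add: add.commute)
qed

lemma semigroup_gcd1:
  fixes S :: "nat set"
  assumes add: "\<And>x y. x \<in> S \<Longrightarrow> y \<in> S \<Longrightarrow> x + y \<in> S" and pos: "0 \<notin> S" and g: "Gcd S = 1"
  shows "\<exists>K. \<forall>n\<ge>K. n \<in> S"
proof -
  have "S \<noteq> {}" using g by auto
  then obtain s where s: "s \<in> S" by auto
  have mc: "\<And>k x. x \<in> S \<Longrightarrow> k \<ge> 1 \<Longrightarrow> k * x \<in> S" using semigroup_mult_closed add by blast
  define D where "D = {d. d > 0 \<and> (\<exists>x\<in>S. x + d \<in> S)}"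
  have s0: "s > 0" using s pos by (cases s) auto
  have "s \<in> D" unfolding D_def using s s0 add[OF s s] by blast
  define m where "m = (LEAST d. d \<in> D)"
  have mD: "m \<in> D" unfolding m_def using \<open>s \<in> D\<close> by (rule LeastI)
  have mmin: "\<And>d. d \<in> D \<Longrightarrow> m \<le> d" unfolding m_def by (rule Least_le)
  obtain x0 where x0: "x0 \<in> S" "x0 + m \<in> S" and m0: "m > 0" using mD unfolding D_def by auto
  have dv: "m dvd t" if t: "t \<in> S" for t
  proof (rule ccontr)
    assume nd: "\<not> m dvd t"
    define q where "q = t div m"
    define r where "r = t mod m"
    have r0: "0 < r" "r < m" using nd m0 unfolding r_def by (auto simp: mod_greater_zero_iff_not_dvd)
    have tq: "t = q * m + r" unfolding q_def r_def by simp
    have A: "(q+1) * (x0 + m) \<in> S" using mc[OF x0(2), of "q+1"] by simp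
    have B: "(q+1) * x0 + t \<in> S" using mc[OF x0(1), of "q+1"] add t by simp
    have "(q+1) * (x0 + m) = ((q+1) * x0 + t) + (m - r)"
      using tq r0 by (simp add: algebra_simps)
    hence "m - r \<in> D" unfolding D_def using A B r0 by auto
    hence "m \<le> m - r" by (rule mmin)
    thus False using r0 by simp
  qed
  have "m dvd Gcd S" by (rule Gcd_greatest) (use dv in auto)
  hence m1: "m = 1" using g by simp
  define a where "a = x0"
  have a0: "a > 0" using x0 pos unfolding a_def by (cases x0) auto
  have aS: "a \<in> S" "a + 1 \<in> S" using x0 m1 unfolding a_def by auto
  have "n \<in> S" if n: "n \<ge> a * a" for n
  proof -
    define q where "q = n div a"
    define r where "r = n mod a"
    have r: "r < a" unfolding r_def using a0 by simp
    have nq: "n = q * a + r" unfolding q_def r_def by simp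
    have "q \<ge> a"
    proof (rule ccontr)
      assume "\<not> a \<le> q"
      hence "q + 1 \<le> a" by simp
      hence "(q + 1) * a \<le> a * a" by (rule mult_right_mono) simp
      moreover have "n < (q + 1) * a" using nq r by simp
      ultimately show False using n by simp
    qed
    hence qr: "q - r \<ge> 1" using r by simp
    have eq: "n = (q - r) * a + r * (a + 1)" using nq qr r
      by (simp add: algebra_simps diff_mult_distrib)
    have A: "(q - r) * a \<in> S" using mc[OF aS(1) qr] .
    show ?thesis
    proof (cases "r = 0")
      case True thus ?thesis using A eq by simp
    next
      case False
      hence "r * (a + 1) \<in> S" using mc[OF aS(2)] by simp
      thus ?thesis using add[OF A] eq by simp
    qed
  qed
  thus ?thesis by blast
qed


lemma (in sequence_space) renewal:
  fixes C :: "nat \<Rightarrow> nat \<Rightarrow> 'a set" and L :: nat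
  assumes C: "\<And>m j. C m j \<in> sets M"
    and sh: "\<And>m b j. b \<le> m \<Longrightarrow> C (m - b) j = C m (j + b)"
    and L: "L \<ge> 1"
    and div: "\<And>B. \<exists>K. B < (\<Sum>k<K. \<Prod>j<k*L+L. measure M (C (k*L) j))"
  shows "AE \<omega> in S. \<exists>m. \<forall>j<m+L. \<omega> j \<in> C m j"
proof -
  define E where "E m = {\<omega> \<in> space S. \<forall>j<m+L. \<omega> j \<in> C m j}" for m
  have Eemb: "E m = prod_emb UNIV (\<lambda>_. M) {..<m+L} (\<Pi>\<^sub>E j\<in>{..<m+L}. C m j)" for m
    unfolding E_def prod_emb_def by (auto simp: space_PiM Pi_iff)
  have Es[measurable]: "E m \<in> sets S" for m
    unfolding Eemb by (rule sets_PiM_I) (auto simp: C)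
  have Em: "measure S (E m) = (\<Prod>j<m+L. measure M (C m j))" for m
    unfolding Eemb by (rule measure_PiM_emb) (auto simp: C)
  define N where "N = space S - (\<Union>m. E m)"
  have Ns[measurable]: "N \<in> sets S" unfolding N_def by auto
  define shf where "shf b \<omega> = (\<lambda>j. \<omega> (j + b))" for b :: nat and \<omega> :: "nat \<Rightarrow> 'a"
  have shm: "shf b \<in> measurable S S" for b
    unfolding shf_def
    by (rule measurable_PiM_single') (auto simp: space_PiM PiE_iff)
  define F where "F m = {\<omega> \<in> space S. \<omega> \<in> E m \<and> shf (m + L) \<omega> \<in> N}" for m
  have Fs: "F m \<in> sets S" for m
  proof -
    have "F m = E m \<inter> (shf (m + L) -` N \<inter> space S)" unfolding F_def using Es[of m] sets.sets_into_space by auto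
    thus ?thesis using Es measurable_sets[OF shm Ns] by auto
  qed
  have Fm: "emeasure S (F m) = emeasure S (E m) * emeasure S N" for m
  proof -
    let ?b = "m + L"
    let ?f = "\<lambda>(\<omega>, \<omega>'). comb_seq ?b \<omega> \<omega>'"
    have "emeasure S (F m) = emeasure (distr (S \<Otimes>\<^sub>M S) S ?f) (F m)"
      by (simp only: PiM_comb_seq)
    also have "\<dots> = emeasure (S \<Otimes>\<^sub>M S) (?f -` F m \<inter> space (S \<Otimes>\<^sub>M S))"
      by (rule emeasure_distr[OF measurable_comb_seq Fs])
    also have "?f -` F m \<inter> space (S \<Otimes>\<^sub>M S) = E m \<times> N"
    proof (intro set_eqI iffI)
      fix x assume x: "x \<in> ?f -` F m \<inter> space (S \<Otimes>\<^sub>M S)"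
      obtain \<omega> \<omega>' where xe: "x = (\<omega>, \<omega>')" by (cases x)
      have sp: "\<omega> \<in> space S" "\<omega>' \<in> space S" using x xe by (auto simp: space_pair_measure)
      have c: "comb_seq ?b \<omega> \<omega>' \<in> F m" using x xe by auto
      have "shf ?b (comb_seq ?b \<omega> \<omega>') = \<omega>'" unfolding shf_def by (auto simp: comb_seq_add)
      hence "\<omega>' \<in> N" using c unfolding F_def by auto
      moreover have "\<omega> \<in> E m" using c sp unfolding F_def E_def by (auto simp: comb_seq_less)
      ultimately show "x \<in> E m \<times> N" using xe by auto
    next
      fix x assume x: "x \<in> E m \<times> N"
      obtain \<omega> \<omega>' where xe: "x = (\<omega>, \<omega>')" by (cases x)
      have sp: "\<omega> \<in> space S" "\<omega>' \<in> space S" using x xe unfolding E_def N_def by auto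
      have "shf ?b (comb_seq ?b \<omega> \<omega>') = \<omega>'" unfolding shf_def by (auto simp: comb_seq_add)
      moreover have "comb_seq ?b \<omega> \<omega>' \<in> space S"
        using sp by (auto simp: space_PiM PiE_iff split: split_comb_seq)
      moreover have "comb_seq ?b \<omega> \<omega>' \<in> E m" using x xe calculation(2) unfolding E_def by (auto simp: comb_seq_less)
      ultimately show "x \<in> ?f -` F m \<inter> space (S \<Otimes>\<^sub>M S)" using x xe sp unfolding F_def
        by (auto simp: space_pair_measure)
    qed
    also have "emeasure (S \<Otimes>\<^sub>M S) (E m \<times> N) = emeasure S (E m) * emeasure S N"
      by (rule P.emeasure_pair_measure_Times) auto
    finally show ?thesis .
  qed
  hence Fmr: "measure S (F m) = measure S (E m) * measure S N" for m
    unfolding measure_def by (simp add: Fm enn2real_mult)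
  have disj: "F (k1 * L) \<inter> F (k2 * L) = {}" if "k1 < k2" for k1 k2
  proof (rule ccontr)
    assume "F (k1 * L) \<inter> F (k2 * L) \<noteq> {}"
    then obtain \<omega> where w1: "\<omega> \<in> F (k1 * L)" and w2: "\<omega> \<in> F (k2 * L)" by blast
    let ?b = "k1 * L + L" and ?m2 = "k2 * L"
    have "Suc k1 * L \<le> k2 * L" using that by (intro mult_le_mono1) simp
    hence bm: "?b \<le> ?m2" by simp
    have E2: "\<omega> \<in> E ?m2" using w2 unfolding F_def by auto
    have "shf ?b \<omega> \<in> E (?m2 - ?b)"
      unfolding E_def shf_def
    proof (intro CollectI conjI allI impI)
      show "(\<lambda>j. \<omega> (j + ?b)) \<in> space S" using E2 unfolding E_def by (auto simp: space_PiM PiE_iff)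
      fix j assume "j < ?m2 - ?b + L"
      hence "j + ?b < ?m2 + L" using bm by simp
      hence "\<omega> (j + ?b) \<in> C ?m2 (j + ?b)" using E2 unfolding E_def by auto
      thus "\<omega> (j + ?b) \<in> C (?m2 - ?b) j" using sh[OF bm] by simp
    qed
    moreover have "shf ?b \<omega> \<in> N" using w1 unfolding F_def by auto
    ultimately show False unfolding N_def by auto
  qed
  have bound: "measure S N * (\<Sum>k<K. measure S (E (k * L))) \<le> 1" for K
  proof -
    have "measure S N * (\<Sum>k<K. measure S (E (k * L))) = (\<Sum>k<K. measure S (F (k * L)))"
      by (simp add: Fmr sum_distrib_left mult.commute)
    also have "\<dots> = measure S (\<Union>k<K. F (k * L))"
    proof (rule measure_finite_Union[symmetric])
      show "disjoint_family_on (\<lambda>k. F (k * L)) {..<K}"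
        unfolding disjoint_family_on_def
      proof (intro ballI impI)
        fix k1 k2 :: nat assume "k1 \<noteq> k2"
        thus "F (k1 * L) \<inter> F (k2 * L) = {}" using disj[of k1 k2] disj[of k2 k1] by (cases "k1 < k2") auto
      qed
    qed (auto simp: Fs)
    also have "\<dots> \<le> 1" by (rule prob_le_1)
    finally show ?thesis .
  qed
  have N0: "measure S N = 0"
  proof (rule ccontr)
    assume "measure S N \<noteq> 0"
    hence pos: "measure S N > 0" using measure_nonneg[of S N] by linarith
    obtain K where K: "1 / measure S N < (\<Sum>k<K. \<Prod>j<k*L+L. measure M (C (k*L) j))" using div by blast
    have "(\<Sum>k<K. \<Prod>j<k*L+L. measure M (C (k*L) j)) = (\<Sum>k<K. measure S (E (k * L)))" by (simp add: Em)
    hence "1 < measure S N * (\<Sum>k<K. measure S (E (k * L)))" using K pos by (simp add: field_simps)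
    thus False using bound[of K] by simp
  qed
  have "N \<in> null_sets S" using N0 Ns by (simp add: null_sets_def emeasure_eq_measure)
  thus ?thesis
    by (rule AE_I') (auto simp: N_def E_def)
qed


abbreviation unif :: "real measure" where "unif \<equiv> uniform_measure lborel {0..<1::real}"

lemma prob_unif: "prob_space unif"
  by (rule prob_space_uniform_measure) auto

lemma sets_unif[simp]: "sets unif = sets borel" by simp

lemma measure_unif_Ico:
  assumes "0 \<le> x" "x \<le> y" "y \<le> 1"
  shows "measure unif {x..<y} = y - x"
proof -
  have "{0..<1::real} \<inter> {x..<y} = {x..<y}" using assms by auto
  hence "emeasure unif {x..<y} = ennreal (y - x)" using assms by (simp add: divide_ennreal_def)
  thus ?thesis unfolding measure_def using assms by simp
qed

lemma prob_Vmeas: "prob_space (Vmeas :: ('g::finite option \<Rightarrow> real) measure)"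
  unfolding Vmeas_def by (rule prob_space_PiM) (rule prob_unif)

lemma space_Vmeas[simp]: "space (Vmeas :: ('g::finite option \<Rightarrow> real) measure) = UNIV"
  unfolding Vmeas_def by (auto simp: space_PiM PiE_def extensional_def)

lemma seq_Vmeas: "sequence_space (Vmeas :: ('g::finite option \<Rightarrow> real) measure)"
proof -
  interpret prob_space "Vmeas :: ('g::finite option \<Rightarrow> real) measure" by (rule prob_Vmeas)
  show ?thesis by unfold_locales
qed

lemma space_Omega[simp]: "space (Omega :: (nat \<Rightarrow> 'g::finite option \<Rightarrow> real) measure) = UNIV"
  unfolding Omega_def by (auto simp: space_PiM PiE_def extensional_def)

lemma box_eq: "PiE UNIV F = {v. \<forall>c. v c \<in> F c}"
  by (auto simp: PiE_def extensional_def Pi_def)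

lemma box_sets:
  assumes "\<And>c. F c \<in> sets borel"
  shows "PiE UNIV F \<in> sets (Vmeas :: ('g::finite option \<Rightarrow> real) measure)"
  unfolding Vmeas_def by (rule sets_PiM_I_finite) (auto simp: assms)

lemma box_measure:
  assumes "\<And>c. F c \<in> sets borel"
  shows "measure (Vmeas :: ('g::finite option \<Rightarrow> real) measure) (PiE UNIV F) = (\<Prod>c\<in>UNIV. measure unif (F c))"
proof -
  interpret U: prob_space unif by (rule prob_unif)
  interpret product_prob_space "\<lambda>_::'g option. unif" UNIV by unfold_locales
  have "PiE UNIV F = {x \<in> space (Pi\<^sub>M UNIV (\<lambda>_. unif)). \<forall>i\<in>UNIV. x i \<in> F i}"
    by (auto simp: space_PiM PiE_def extensional_def Pi_def)
  hence "emeasure (Pi\<^sub>M UNIV (\<lambda>_. unif)) (PiE UNIV F) = (\<Prod>c\<in>UNIV. emeasure unif (F c))"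
    using emeasure_PiM_Collect[of UNIV F] assms by simp
  thus ?thesis unfolding Vmeas_def emeasure_eq_measure U.emeasure_eq_measure
    by (simp add: prod_ennreal measure_nonneg prod_nonneg)
qed


locale cor2 =
  fixes p :: "'g::finite \<Rightarrow> (nat \<Rightarrow> 'g) \<Rightarrow> real"
    and fb :: "real \<Rightarrow> (nat \<Rightarrow> 'g) \<Rightarrow> 'g"
    and gg :: "nat \<Rightarrow> 'g"
  assumes p_nonneg: "\<And>g w. 0 \<le> p g w"
    and p_le1: "\<And>g w. p g w \<le> 1"
    and p_sum: "\<And>w. (\<Sum>g\<in>UNIV. p g w) = 1"
    and gg_adm: "gg \<in> admissible p"
    and fb: "fbar_ok p fb"
    and cond_i: "filterlim (\<lambda>N. \<Sum>n\<in>{1..N}. \<Prod>m\<in>{1..n}. amin p m) at_top sequentially"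
    and cond_ii: "\<exists>C. irreducible_class (arcs p) C \<and> aperiodic_class (arcs p) C
                     \<and> (\<forall>C'. irreducible_class (arcs p) C' \<longrightarrow> C' = C)"
begin

abbreviation "adm \<equiv> admissible p"
abbreviation "a \<equiv> amin p 1"

lemma acond_le_p:
  assumes "z \<in> adm" "\<forall>i<k. z i = w i"
  shows "acond p k g w \<le> p g z"
proof -
  let ?S = "{z \<in> adm. \<forall>i<k. z i = w i}"
  have "z \<in> ?S" using assms by auto
  hence "?S \<noteq> {}" by auto
  moreover have "(INF z\<in>?S. p g z) \<le> p g z"
    by (rule cINF_lower) (use \<open>z \<in> ?S\<close> in \<open>auto intro!: bdd_belowI[of _ 0] simp: p_nonneg\<close>)
  ultimately show ?thesis unfolding acond_def Let_def by (simp only: if_False)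
qed

lemma acond_nonneg: "0 \<le> acond p k g w"
proof -
  let ?S = "{z \<in> adm. \<forall>i<k. z i = w i}"
  show ?thesis
  proof (cases "?S = {}")
    case True thus ?thesis unfolding acond_def Let_def by simp
  next
    case False
    have "0 \<le> (INF z\<in>?S. p g z)" by (rule cINF_greatest) (use False p_nonneg in auto)
    thus ?thesis unfolding acond_def Let_def if_not_P[OF False] .
  qed
qed

lemma acond_local: "\<forall>i<k. w i = w' i \<Longrightarrow> acond p k g w = acond p k g w'"
proof -
  assume h: "\<forall>i<k. w i = w' i"
  have eq: "{z \<in> adm. \<forall>i<k. z i = w i} = {z \<in> adm. \<forall>i<k. z i = w' i}" using h by auto
  show ?thesis unfolding acond_def Let_def by (simp only: eq)
qed

lemma atot_local: "\<forall>i<k. w i = w' i \<Longrightarrow> atot p k w = atot p k w'"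
  unfolding atot_def by (auto intro!: sum.cong acond_local)

lemma alow_local: "\<forall>i<k. w i = w' i \<Longrightarrow> alow p k w = alow p k w'"
  unfolding alow_def using atot_local[of "k - 1" w w'] by auto

lemma atot_nonneg: "0 \<le> atot p k w"
  unfolding atot_def by (simp add: acond_nonneg sum_nonneg)

lemma atot_le1: "w \<in> adm \<Longrightarrow> atot p k w \<le> 1"
proof -
  assume "w \<in> adm"
  hence "atot p k w \<le> (\<Sum>g\<in>UNIV. p g w)" unfolding atot_def
    by (intro sum_mono acond_le_p) auto
  thus ?thesis using p_sum by simp
qed

lemma amin_le: "w \<in> adm \<Longrightarrow> amin p k \<le> atot p k w"
  unfolding amin_def by (rule cINF_lower) (auto intro: bdd_belowI2 atot_nonneg)

lemma amin_nonneg: "0 \<le> amin p k"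
  unfolding amin_def using gg_adm by (intro cINF_greatest) (auto simp: atot_nonneg)

lemma amin_le1: "amin p k \<le> 1"
  using amin_le[OF gg_adm] atot_le1[OF gg_adm] by (meson order_trans)

lemma not_bounded_sums:
  assumes "\<And>N. (\<Sum>n\<in>{1..N}. \<Prod>m\<in>{1..n}. amin p m) \<le> B"
  shows False
proof -
  have "\<forall>\<^sub>F N in sequentially. B + 1 \<le> (\<Sum>n\<in>{1..N}. \<Prod>m\<in>{1..n}. amin p m)"
    using cond_i unfolding filterlim_at_top by blast
  then obtain N where "B + 1 \<le> (\<Sum>n\<in>{1..N}. \<Prod>m\<in>{1..n}. amin p m)"
    unfolding eventually_sequentially by blast
  with assms[of N] show False by simp
qed

lemma amin1_pos: "0 < a"
proof (rule ccontr)
  assume "\<not> 0 < a"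
  hence a0: "a = 0" using amin_nonneg[of 1] by simp
  have "(\<Sum>n\<in>{1..N}. \<Prod>m\<in>{1..n}. amin p m) \<le> 0" for N
  proof -
    have *: "(\<Prod>m\<in>{1..n}. amin p m) = 0" if "n \<in> {1..N}" for n
      using that a0 by (intro prod_zero bexI[of _ 1]) auto
    show ?thesis
    proof (rule sum_nonpos)
      fix n assume n: "n \<in> {1..N}"
      show "(\<Prod>m\<in>{1..n}. amin p m) \<le> 0" using *[OF n] by (rule eq_refl)
    qed
  qed
  thus False using not_bounded_sums by blast
qed

lemma amin_big: "u < 1 \<Longrightarrow> \<exists>k\<ge>1. u < amin p k"
proof (rule ccontr)
  assume u1: "u < 1" and "\<not> (\<exists>k\<ge>1. u < amin p k)"
  hence le: "\<And>k. k \<ge> 1 \<Longrightarrow> amin p k \<le> u" by auto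
  have u0: "0 \<le> u" using le[of 1] amin_nonneg[of 1] by simp
  have "(\<Sum>n\<in>{1..N}. \<Prod>m\<in>{1..n}. amin p m) \<le> 1 / (1 - u)" for N
  proof -
    have "(\<Sum>n\<in>{1..N}. \<Prod>m\<in>{1..n}. amin p m) \<le> (\<Sum>n\<in>{1..N}. u ^ n)"
    proof (rule sum_mono)
      fix n assume "n \<in> {1..N}"
      have "(\<Prod>m\<in>{1..n}. amin p m) \<le> (\<Prod>m\<in>{1..n}. u)"
        by (rule prod_mono) (auto simp: amin_nonneg le)
      thus "(\<Prod>m\<in>{1..n}. amin p m) \<le> u ^ n" by simp
    qed
    also have "\<dots> \<le> (\<Sum>n<Suc N. u ^ n)"
      by (rule sum_mono2) (auto simp: u0)
    also have "\<dots> = (1 - u ^ Suc N) / (1 - u)" by (simp only: sum_gp_strict) (use u1 in simp)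
    also have "\<dots> \<le> 1 / (1 - u)" using u1 u0 by (intro divide_right_mono) auto
    finally show ?thesis .
  qed
  thus False using not_bounded_sums by blast
qed

lemma fb3_all: "\<forall>k\<ge>2. \<forall>w\<in>admissible p. \<forall>g. \<exists>c d. c \<le> d \<and> d - c = bcond p k g w \<and>
          {u\<in>{alow p k w..<atot p k w}. fb u w = g} = {c..<d}"
  using fb unfolding fbar_ok_def by (elim conjE) assumption

lemma fb3: "k \<ge> 2 \<Longrightarrow> w \<in> adm \<Longrightarrow> \<exists>c d. c \<le> d \<and> d - c = bcond p k g w \<and>
          {u\<in>{alow p k w..<atot p k w}. fb u w = g} = {c..<d}"
  using fb3_all by blast

lemma fb4: "k \<ge> 2 \<Longrightarrow> w \<in> adm \<Longrightarrow> w' \<in> adm \<Longrightarrow> \<forall>i<k. w i = w' i \<Longrightarrow>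
   u \<in> {alow p k w..<atot p k w} \<Longrightarrow> fb u w = fb u w'"
proof -
  have "\<forall>k\<ge>2. \<forall>w\<in>admissible p. \<forall>w'\<in>admissible p. (\<forall>i<k. w i = w' i) \<longrightarrow>
          (\<forall>u\<in>{alow p k w..<atot p k w}. fb u w = fb u w')"
    using fb unfolding fbar_ok_def by (elim conjE) assumption
  thus "k \<ge> 2 \<Longrightarrow> w \<in> adm \<Longrightarrow> w' \<in> adm \<Longrightarrow> \<forall>i<k. w i = w' i \<Longrightarrow>
   u \<in> {alow p k w..<atot p k w} \<Longrightarrow> fb u w = fb u w'" by blast
qed

lemma fb5: "\<exists>c1 d1 c2 d2 :: 'g \<Rightarrow> 'g \<Rightarrow> real. \<forall>w\<in>admissible p. \<forall>h.
          c1 h (w 0) \<le> d1 h (w 0) \<and> c2 h (w 0) \<le> d2 h (w 0)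
        \<and> {c1 h (w 0)..<d1 h (w 0)} \<inter> {c2 h (w 0)..<d2 h (w 0)} = {}
        \<and> (d1 h (w 0) - c1 h (w 0)) + (d2 h (w 0) - c2 h (w 0)) = acond p 1 h w
        \<and> {u\<in>{0..<atot p 1 w}. fb u w = h} = {c1 h (w 0)..<d1 h (w 0)} \<union> {c2 h (w 0)..<d2 h (w 0)}
        \<and> (acond p 1 h w > 0 \<longrightarrow> {c1 h (w 0)..<d1 h (w 0)} \<inter> {0..<amin p 1} \<noteq> {})"
  using fb unfolding fbar_ok_def by (elim conjE) assumption

lemma fb5E:
  obtains c1 d1 c2 d2 :: "'g \<Rightarrow> 'g \<Rightarrow> real" where
    "\<And>w h. w \<in> adm \<Longrightarrow> c1 h (w 0) \<le> d1 h (w 0)"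
    "\<And>w h. w \<in> adm \<Longrightarrow> c2 h (w 0) \<le> d2 h (w 0)"
    "\<And>w h. w \<in> adm \<Longrightarrow> (d1 h (w 0) - c1 h (w 0)) + (d2 h (w 0) - c2 h (w 0)) = acond p 1 h w"
    "\<And>w h. w \<in> adm \<Longrightarrow> {u\<in>{0..<atot p 1 w}. fb u w = h} = {c1 h (w 0)..<d1 h (w 0)} \<union> {c2 h (w 0)..<d2 h (w 0)}"
    "\<And>w h. w \<in> adm \<Longrightarrow> acond p 1 h w > 0 \<Longrightarrow> {c1 h (w 0)..<d1 h (w 0)} \<inter> {0..<amin p 1} \<noteq> {}"
proof -
  from fb5 obtain c1 d1 c2 d2 :: "'g \<Rightarrow> 'g \<Rightarrow> real" where H: "\<forall>w\<in>admissible p. \<forall>h.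
          c1 h (w 0) \<le> d1 h (w 0) \<and> c2 h (w 0) \<le> d2 h (w 0)
        \<and> {c1 h (w 0)..<d1 h (w 0)} \<inter> {c2 h (w 0)..<d2 h (w 0)} = {}
        \<and> (d1 h (w 0) - c1 h (w 0)) + (d2 h (w 0) - c2 h (w 0)) = acond p 1 h w
        \<and> {u\<in>{0..<atot p 1 w}. fb u w = h} = {c1 h (w 0)..<d1 h (w 0)} \<union> {c2 h (w 0)..<d2 h (w 0)}
        \<and> (acond p 1 h w > 0 \<longrightarrow> {c1 h (w 0)..<d1 h (w 0)} \<inter> {0..<amin p 1} \<noteq> {})"
    by blast
  show thesis
  proof (rule that)
    fix w h assume w: "w \<in> adm"
    note Hw = H[rule_format, OF w, of h]
    show "c1 h (w 0) \<le> d1 h (w 0)" using Hw by (elim conjE)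
    show "c2 h (w 0) \<le> d2 h (w 0)" using Hw by (elim conjE)
    show "(d1 h (w 0) - c1 h (w 0)) + (d2 h (w 0) - c2 h (w 0)) = acond p 1 h w" using Hw by (elim conjE)
    show "{u\<in>{0..<atot p 1 w}. fb u w = h} = {c1 h (w 0)..<d1 h (w 0)} \<union> {c2 h (w 0)..<d2 h (w 0)}"
      using Hw by (elim conjE)
    show "acond p 1 h w > 0 \<Longrightarrow> {c1 h (w 0)..<d1 h (w 0)} \<inter> {0..<amin p 1} \<noteq> {}"
      using Hw by (elim conjE) blast
  qed
qed

lemma loc1:
  assumes w: "w \<in> adm" and w': "w' \<in> adm" and e: "w 0 = w' 0" and u: "0 \<le> u" "u < atot p 1 w"
  shows "fb u w = fb u w'"
proof -
  obtain c1 d1 c2 d2 :: "'g \<Rightarrow> 'g \<Rightarrow> real" where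
    H1: "\<And>w h. w \<in> adm \<Longrightarrow> c1 h (w 0) \<le> d1 h (w 0)" and
    H2: "\<And>w h. w \<in> adm \<Longrightarrow> c2 h (w 0) \<le> d2 h (w 0)" and
    H3: "\<And>w h. w \<in> adm \<Longrightarrow> (d1 h (w 0) - c1 h (w 0)) + (d2 h (w 0) - c2 h (w 0)) = acond p 1 h w" and
    H: "\<And>w h. w \<in> adm \<Longrightarrow> {u\<in>{0..<atot p 1 w}. fb u w = h} = {c1 h (w 0)..<d1 h (w 0)} \<union> {c2 h (w 0)..<d2 h (w 0)}" and
    H5: "\<And>w h. w \<in> adm \<Longrightarrow> acond p 1 h w > 0 \<Longrightarrow> {c1 h (w 0)..<d1 h (w 0)} \<inter> {0..<amin p 1} \<noteq> {}"
    using fb5E by blast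
  let ?h = "fb u w"
  have "u \<in> {u\<in>{0..<atot p 1 w}. fb u w = ?h}" using u by auto
  hence "u \<in> {c1 ?h (w 0)..<d1 ?h (w 0)} \<union> {c2 ?h (w 0)..<d2 ?h (w 0)}" using H[OF w] by blast
  hence "u \<in> {u\<in>{0..<atot p 1 w'}. fb u w' = ?h}" using H[OF w', of ?h] e by simp
  thus ?thesis by simp
qed

lemma pos1:
  assumes w: "w \<in> adm" and u: "0 \<le> u" "u < atot p 1 w"
  shows "0 < acond p 1 (fb u w) w"
proof (rule ccontr)
  assume "\<not> 0 < acond p 1 (fb u w) w"
  hence z: "acond p 1 (fb u w) w = 0" using acond_nonneg[of 1 "fb u w" w] by simp
  obtain c1 d1 c2 d2 :: "'g \<Rightarrow> 'g \<Rightarrow> real" where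
    H1: "\<And>w h. w \<in> adm \<Longrightarrow> c1 h (w 0) \<le> d1 h (w 0)" and
    H2: "\<And>w h. w \<in> adm \<Longrightarrow> c2 h (w 0) \<le> d2 h (w 0)" and
    H3: "\<And>w h. w \<in> adm \<Longrightarrow> (d1 h (w 0) - c1 h (w 0)) + (d2 h (w 0) - c2 h (w 0)) = acond p 1 h w" and
    H: "\<And>w h. w \<in> adm \<Longrightarrow> {u\<in>{0..<atot p 1 w}. fb u w = h} = {c1 h (w 0)..<d1 h (w 0)} \<union> {c2 h (w 0)..<d2 h (w 0)}" and
    H5: "\<And>w h. w \<in> adm \<Longrightarrow> acond p 1 h w > 0 \<Longrightarrow> {c1 h (w 0)..<d1 h (w 0)} \<inter> {0..<amin p 1} \<noteq> {}"
    using fb5E by blast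
  let ?h = "fb u w"
  have "u \<in> {u\<in>{0..<atot p 1 w}. fb u w = ?h}" using u by auto
  hence "u \<in> {c1 ?h (w 0)..<d1 ?h (w 0)} \<union> {c2 ?h (w 0)..<d2 ?h (w 0)}" using H[OF w] by blast
  moreover have "c1 ?h (w 0) \<le> d1 ?h (w 0)" "c2 ?h (w 0) \<le> d2 ?h (w 0)"
    "(d1 ?h (w 0) - c1 ?h (w 0)) + (d2 ?h (w 0) - c2 ?h (w 0)) = 0"
    using H1[OF w] H2[OF w] H3[OF w] z by auto
  ultimately show False by auto
qed

lemma markov_int:
  assumes w0: "w0 \<in> adm" and arc: "(w0 0, g) \<in> arcs p"
  shows "\<exists>lo hi. 0 \<le> lo \<and> lo < hi \<and> hi \<le> a \<and>
            (\<forall>w\<in>adm. w 0 = w0 0 \<longrightarrow> (\<forall>u\<in>{lo..<hi}. fb u w = g))"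
proof -
  obtain c1 d1 c2 d2 :: "'g \<Rightarrow> 'g \<Rightarrow> real" where
    H1: "\<And>w h. w \<in> adm \<Longrightarrow> c1 h (w 0) \<le> d1 h (w 0)" and
    H2: "\<And>w h. w \<in> adm \<Longrightarrow> c2 h (w 0) \<le> d2 h (w 0)" and
    H3: "\<And>w h. w \<in> adm \<Longrightarrow> (d1 h (w 0) - c1 h (w 0)) + (d2 h (w 0) - c2 h (w 0)) = acond p 1 h w" and
    H: "\<And>w h. w \<in> adm \<Longrightarrow> {u\<in>{0..<atot p 1 w}. fb u w = h} = {c1 h (w 0)..<d1 h (w 0)} \<union> {c2 h (w 0)..<d2 h (w 0)}" and
    H5: "\<And>w h. w \<in> adm \<Longrightarrow> acond p 1 h w > 0 \<Longrightarrow> {c1 h (w 0)..<d1 h (w 0)} \<inter> {0..<amin p 1} \<noteq> {}"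
    using fb5E by blast
  have "acond p 1 g w0 = acond p 1 g (\<lambda>_. w0 0)" by (rule acond_local) auto
  hence pos: "acond p 1 g w0 > 0" using arc unfolding arcs_def by simp
  let ?z = "w0 0"
  have ne: "{c1 g ?z..<d1 g ?z} \<inter> {0..<a} \<noteq> {}" using H5[OF w0 pos] .
  define lo where "lo = max (c1 g ?z) 0"
  define hi where "hi = min (d1 g ?z) a"
  have "lo < hi" using ne unfolding lo_def hi_def by auto
  moreover have "0 \<le> lo" "hi \<le> a" unfolding lo_def hi_def by auto
  moreover have "fb u w = g" if "w \<in> adm" "w 0 = ?z" "u \<in> {lo..<hi}" for w u
  proof -
    have "a \<le> atot p 1 w" using amin_le that by blast
    hence "u \<in> {c1 g (w 0)..<d1 g (w 0)}" "u \<in> {0..<atot p 1 w}"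
      using that unfolding lo_def hi_def by auto
    hence "u \<in> {u\<in>{0..<atot p 1 w}. fb u w = g}" using H[OF that(1), of g] by blast
    thus ?thesis by simp
  qed
  ultimately show ?thesis by blast
qed

lemma locality0:
  assumes "w \<in> adm" "w' \<in> adm" "\<forall>i<Suc j. w i = w' i" "0 \<le> u" "u < atot p (Suc j) w"
  shows "fb u w = fb u w'"
  using assms
proof (induction j arbitrary: u)
  case 0
  show ?case by (rule loc1) (use 0 in auto)
next
  case (Suc j)
  show ?case
  proof (cases "u < atot p (Suc j) w")
    case True
    have "\<forall>i<Suc j. w i = w' i" using Suc.prems(3) by auto
    thus ?thesis using Suc.IH[OF Suc.prems(1,2) _ Suc.prems(4) True] by blast
  next
    case False
    hence "u \<in> {alow p (Suc (Suc j)) w..<atot p (Suc (Suc j)) w}" using Suc.prems(5) unfolding alow_def by auto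
    thus ?thesis using fb4[of "Suc (Suc j)" w w' u] Suc.prems(1-3) by simp
  qed
qed

lemma locality:
  assumes "k \<ge> 1" "w \<in> adm" "w' \<in> adm" "\<forall>i<k. w i = w' i" "0 \<le> u" "u < atot p k w"
  shows "fb u w = fb u w'"
proof -
  obtain j where "k = Suc j" using assms(1) by (cases k) auto
  thus ?thesis using locality0 assms by blast
qed

lemma positivity0:
  assumes "w \<in> adm" "0 \<le> u" "u < atot p (Suc j) w"
  shows "0 < p (fb u w) w"
  using assms
proof (induction j arbitrary: u)
  case 0
  have "0 < acond p 1 (fb u w) w" by (rule pos1) (use 0 in auto)
  moreover have "acond p 1 (fb u w) w \<le> p (fb u w) w" by (rule acond_le_p) (use 0 in auto)
  ultimately show ?case by simp
next
  case (Suc n)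
  show ?case
  proof (cases "u < atot p (Suc n) w")
    case True thus ?thesis using Suc.IH Suc.prems by blast
  next
    case False
    let ?g = "fb u w"
    have u: "u \<in> {alow p (Suc (Suc n)) w..<atot p (Suc (Suc n)) w}" using False Suc.prems unfolding alow_def by auto
    obtain c d where "c \<le> d" and cd: "d - c = bcond p (Suc (Suc n)) ?g w" and
       I: "{u\<in>{alow p (Suc (Suc n)) w..<atot p (Suc (Suc n)) w}. fb u w = ?g} = {c..<d}"
      using fb3[of "Suc (Suc n)" w ?g] Suc.prems by auto
    have "u \<in> {c..<d}" using u I by blast
    hence "c < d" by auto
    hence "bcond p (Suc (Suc n)) ?g w > 0" using cd by simp
    hence "acond p (Suc (Suc n)) ?g w > 0" unfolding bcond_def using acond_nonneg[of "Suc n" ?g w] by auto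
    moreover have "acond p (Suc (Suc n)) ?g w \<le> p ?g w" using Suc.prems by (intro acond_le_p) auto
    ultimately show ?thesis by simp
  qed
qed

lemma positivity:
  assumes "k \<ge> 1" "w \<in> adm" "0 \<le> u" "u < atot p k w"
  shows "0 < p (fb u w) w"
proof -
  obtain j where "k = Suc j" using assms(1) by (cases k) auto
  thus ?thesis using positivity0 assms by blast
qed

lemma map_push: "map (push g w) [0..<Suc n] = g # map w [0..<n]"
  by (induction n) (auto simp: push_def)

lemma push_adm:
  assumes w: "w \<in> adm" and pg: "0 < p g w"
  shows "push g w \<in> adm"
  unfolding admissible_def
proof (intro CollectI allI impI)
  fix n :: nat assume "n \<ge> 1"
  then obtain m where n: "n = Suc m" by (cases n) auto
  show "\<not> forbidden p (map (push g w) [0..<n])"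
  proof (cases m)
    case 0
    thus ?thesis using n pg by (auto simp: map_push push_def intro!: exI[of _ w])
  next
    case (Suc m')
    let ?xs = "map w [0..<Suc m']"
    obtain s1 ss where xs: "?xs = s1 # ss" by (cases ?xs) auto
    have nf: "\<not> forbidden p ?xs" using w unfolding admissible_def by auto
    have "\<forall>i<length (s1 # ss). w i = (s1 # ss) ! i"
      unfolding xs[symmetric] by (simp del: upt_Suc)
    hence "\<not> (\<forall>z. (\<forall>i < length (s1 # ss). z i = (s1 # ss) ! i) \<longrightarrow> p g z = 0)"
      using pg by auto
    moreover have L: "map (push g w) [0..<n] = g # s1 # ss"
      using xs by (simp only: n \<open>m = Suc m'\<close> map_push)
    ultimately show ?thesis using nf unfolding L forbidden.simps xs by blast
  qed
qed

lemma fhat_pos: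
  assumes w: "w \<in> adm" and v: "v \<in> box01"
  shows "0 < p (fhat p fb v w) w"
proof (cases "a \<le> v None")
  case True
  have v1: "0 \<le> v None" "v None < 1" using v unfolding box01_def by auto
  obtain k where k: "k \<ge> 1" "v None < amin p k" using amin_big[OF v1(2)] by auto
  have "v None < atot p k w" using k amin_le[OF w, of k] by simp
  thus ?thesis using True positivity[OF k(1) w v1(1)] unfolding fhat_def by simp
next
  case False
  have v1: "0 \<le> v (Some (w 0))" "v (Some (w 0)) < 1" using v unfolding box01_def by auto
  have "a * v (Some (w 0)) < a * 1" using v1 amin1_pos by (intro mult_strict_left_mono) auto
  also have "\<dots> \<le> atot p 1 w" using amin_le[OF w] by simp
  finally have "0 < p (fb (a * v (Some (w 0))) w) w"
    using v1 amin1_pos by (intro positivity[of 1]) (auto simp: w)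
  thus ?thesis using False unfolding fhat_def by simp
qed

lemma traj_adm: "w \<in> adm \<Longrightarrow> (\<forall>i<n. vs i \<in> box01) \<Longrightarrow> traj p fb vs w n \<in> adm"
  by (induction n) (auto intro!: push_adm fhat_pos)

lemma fhat_local:
  assumes w: "w \<in> adm" and w': "w' \<in> adm" and v: "v \<in> box01" and k: "k \<ge> 1"
    and vk: "v None < amin p k" and e: "\<forall>i<k. w i = w' i"
  shows "fhat p fb v w = fhat p fb v w'"
proof (cases "a \<le> v None")
  case True
  have v1: "0 \<le> v None" using v unfolding box01_def by auto
  have "v None < atot p k w" using vk amin_le[OF w, of k] by simp
  thus ?thesis using True locality[OF k w w' e v1] unfolding fhat_def by simp
next
  case False
  have e0: "w 0 = w' 0" using e k by auto
  have v1: "0 \<le> v (Some (w 0))" "v (Some (w 0)) < 1" using v unfolding box01_def by auto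
  have "a * v (Some (w 0)) < a * 1" using v1 amin1_pos by (intro mult_strict_left_mono) auto
  also have "\<dots> \<le> atot p 1 w" using amin_le[OF w] by simp
  finally have "fb (a * v (Some (w 0))) w = fb (a * v (Some (w 0))) w'"
    using v1 amin1_pos e0 by (intro locality[of 1]) (auto simp: w w')
  thus ?thesis using False e0 unfolding fhat_def by simp
qed

abbreviation "A \<equiv> arcs p"

lemma reach_class:
  assumes C: "irreducible_class A C" and uniq: "\<forall>C'. irreducible_class A C' \<longrightarrow> C' = C"
    and y: "y \<in> C"
  shows "(z, y) \<in> A\<^sup>*"
proof -
  define R where "R v = {u. (v, u) \<in> A\<^sup>*}" for v
  obtain v where zv: "(z, v) \<in> A\<^sup>*" and vmin: "\<And>u. (z, u) \<in> A\<^sup>* \<Longrightarrow> card (R v) \<le> card (R u)"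
    using ex_has_least_nat[of "\<lambda>u. (z, u) \<in> A\<^sup>*" z "\<lambda>u. card (R u)"] by auto
  have bk: "(u, v) \<in> A\<^sup>*" if "u \<in> R v" for u
  proof -
    have sub: "R u \<subseteq> R v" using that unfolding R_def by auto
    have "card (R v) \<le> card (R u)" using vmin zv that unfolding R_def by (meson mem_Collect_eq rtrancl_trans)
    moreover have "card (R u) \<le> card (R v)" using sub by (intro card_mono) auto
    ultimately have "R u = R v" using sub by (intro card_subset_eq) auto
    moreover have "v \<in> R v" unfolding R_def by simp
    ultimately show ?thesis unfolding R_def by auto
  qed
  define Cv where "Cv = {u. (v, u) \<in> A\<^sup>* \<and> (u, v) \<in> A\<^sup>*}"
  have "comm_class A Cv" unfolding comm_class_def Cv_def by blast
  moreover have "closed_set A Cv" unfolding closed_set_def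
  proof (intro ballI allI impI)
    fix x y' assume "x \<in> Cv" "(x, y') \<in> A"
    hence "(v, y') \<in> A\<^sup>*" unfolding Cv_def by auto
    thus "y' \<in> Cv" using bk unfolding Cv_def R_def by auto
  qed
  ultimately have "Cv = C" using uniq unfolding irreducible_class_def by blast
  hence "(v, y) \<in> A\<^sup>*" using y unfolding Cv_def by auto
  thus ?thesis using zv by auto
qed

lemma graph_fact: "\<exists>y M. M \<ge> 1 \<and> (\<forall>z. (z, y) \<in> A ^^ M)"
proof -
  obtain C where C: "irreducible_class A C" and ap: "aperiodic_class A C"
      and uniq: "\<forall>C'. irreducible_class A C' \<longrightarrow> C' = C"
    using cond_ii by blast
  obtain y where Cy: "C = {u. (y, u) \<in> A\<^sup>* \<and> (u, y) \<in> A\<^sup>*}"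
    using C unfolding irreducible_class_def comm_class_def by blast
  have yC: "y \<in> C" using Cy by simp
  have per: "Gcd {n. n > 0 \<and> (y, y) \<in> A ^^ n} = 1"
    using ap yC unfolding aperiodic_class_def period_def by blast
  obtain K where K: "\<And>n. n \<ge> K \<Longrightarrow> (y, y) \<in> A ^^ n"
  proof -
    have "\<exists>K. \<forall>n\<ge>K. n \<in> {n. n > 0 \<and> (y, y) \<in> A ^^ n}"
    proof (rule semigroup_gcd1[OF _ _ per])
      fix x1 x2 assume "x1 \<in> {n. n > 0 \<and> (y, y) \<in> A ^^ n}" "x2 \<in> {n. n > 0 \<and> (y, y) \<in> A ^^ n}"
      thus "x1 + x2 \<in> {n. n > 0 \<and> (y, y) \<in> A ^^ n}" by (auto simp: relpow_add)
    qed auto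
    thus ?thesis using that by blast
  qed
  have "\<forall>z. \<exists>d. (z, y) \<in> A ^^ d"
    using reach_class[OF C uniq yC] by (simp add: rtrancl_power)
  then obtain f where f: "\<And>z. (z, y) \<in> A ^^ f z" by metis
  define M where "M = Max (range f) + K + 1"
  have "(z, y) \<in> A ^^ M" for z
  proof -
    have fz: "f z \<le> Max (range f)" by (rule Max_ge) auto
    have "M - f z \<ge> K" using fz unfolding M_def by arith
    hence "(y, y) \<in> A ^^ (M - f z)" using K by blast
    hence "(z, y) \<in> A ^^ (f z) O A ^^ (M - f z)" using f[of z] by (intro relcompI)
    hence "(z, y) \<in> A ^^ (f z + (M - f z))" by (simp only: relpow_add)
    moreover have "f z + (M - f z) = M" using fz unfolding M_def by arith
    ultimately show ?thesis by simp
  qed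
  moreover have "M \<ge> 1" unfolding M_def by simp
  ultimately show ?thesis by blast
qed

definition yy where "yy = (SOME y. \<exists>M. M \<ge> 1 \<and> (\<forall>z. (z, y) \<in> A ^^ M))"
definition MM where "MM = (SOME M. M \<ge> 1 \<and> (\<forall>z. (z, yy) \<in> A ^^ M))"

lemma MM: "MM \<ge> 1" "\<And>z. (z, yy) \<in> A ^^ MM"
proof -
  have "\<exists>M. M \<ge> 1 \<and> (\<forall>z. (z, yy) \<in> A ^^ M)"
    unfolding yy_def using graph_fact by (rule someI_ex)
  hence "MM \<ge> 1 \<and> (\<forall>z. (z, yy) \<in> A ^^ MM)" unfolding MM_def by (rule someI_ex)
  thus "MM \<ge> 1" "\<And>z. (z, yy) \<in> A ^^ MM" by auto
qed

definition good where "good z \<longleftrightarrow> (\<exists>w\<in>adm. w 0 = z)"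

definition nu where "nu t z = (SOME g. (z, g) \<in> A \<and> (g, yy) \<in> A ^^ (MM - Suc t))"

definition LH where "LH z g = (SOME lh. 0 \<le> fst lh \<and> fst lh < snd lh \<and> snd lh \<le> a \<and>
            (\<forall>w\<in>adm. w 0 = z \<longrightarrow> (\<forall>u\<in>{fst lh..<snd lh}. fb u w = g)))"

lemma LH:
  assumes "good z" "(z, g) \<in> A"
  shows "0 \<le> fst (LH z g) \<and> fst (LH z g) < snd (LH z g) \<and> snd (LH z g) \<le> a \<and>
            (\<forall>w\<in>adm. w 0 = z \<longrightarrow> (\<forall>u\<in>{fst (LH z g)..<snd (LH z g)}. fb u w = g))"
proof -
  obtain w0 where w0: "w0 \<in> adm" "w0 0 = z" using assms(1) unfolding good_def by auto
  obtain lo hi where "0 \<le> lo \<and> lo < hi \<and> hi \<le> a \<and>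
            (\<forall>w\<in>adm. w 0 = w0 0 \<longrightarrow> (\<forall>u\<in>{lo..<hi}. fb u w = g))"
    using markov_int[OF w0(1)] assms(2) w0(2) by blast
  hence "\<exists>lh. 0 \<le> fst lh \<and> fst lh < snd lh \<and> snd lh \<le> a \<and>
            (\<forall>w\<in>adm. w 0 = z \<longrightarrow> (\<forall>u\<in>{fst lh..<snd lh}. fb u w = g))"
    using w0(2) by (intro exI[of _ "(lo, hi)"]) auto
  thus ?thesis unfolding LH_def by (rule someI_ex)
qed

definition Jint where "Jint t z = (if good z \<and> (z, nu t z) \<in> A
     then {fst (LH z (nu t z)) / a ..< snd (LH z (nu t z)) / a} else {0..<1})"

definition Bk :: "nat \<Rightarrow> ('g option \<Rightarrow> real) set" where
  "Bk t = PiE UNIV (\<lambda>c. case c of None \<Rightarrow> {0..<a} | Some z \<Rightarrow> Jint t z)"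

definition Al :: "nat \<Rightarrow> ('g option \<Rightarrow> real) set" where
  "Al k = PiE UNIV (\<lambda>c. case c of None \<Rightarrow> {0..<amin p k} | Some z \<Rightarrow> {0..<1})"

lemma Jint_sub: "Jint t z \<subseteq> {0..<1}"
proof (cases "good z \<and> (z, nu t z) \<in> A")
  case True
  note L = LH[OF conjunct1[OF True] conjunct2[OF True]]
  have "0 \<le> fst (LH z (nu t z)) / a" using L amin1_pos by simp
  moreover have "snd (LH z (nu t z)) / a \<le> 1" using L amin1_pos by simp
  ultimately show ?thesis using True unfolding Jint_def by auto
qed (auto simp: Jint_def)

lemma Bk_mem: "v \<in> Bk t \<Longrightarrow> v None \<in> {0..<a} \<and> (\<forall>z. v (Some z) \<in> Jint t z)"
proof -
  assume v: "v \<in> Bk t"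
  have H: "\<forall>c. v c \<in> (case c of None \<Rightarrow> {0..<a} | Some z \<Rightarrow> Jint t z)"
    using v unfolding Bk_def PiE_iff by blast
  have "v None \<in> {0..<a}" using spec[OF H, of None] by simp
  moreover have "\<forall>z. v (Some z) \<in> Jint t z"
  proof
    fix z show "v (Some z) \<in> Jint t z" using spec[OF H, of "Some z"] by simp
  qed
  ultimately show ?thesis by blast
qed

lemma Al_mem: "v \<in> Al k \<Longrightarrow> v None \<in> {0..<amin p k} \<and> (\<forall>z. v (Some z) \<in> {0..<1})"
proof -
  assume v: "v \<in> Al k"
  have H: "\<forall>c. v c \<in> (case c of None \<Rightarrow> {0..<amin p k} | Some z \<Rightarrow> {0..<1})"
    using v unfolding Al_def PiE_iff by blast
  have "v None \<in> {0..<amin p k}" using spec[OF H, of None] by simp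
  moreover have "\<forall>z. v (Some z) \<in> {0..<1}"
  proof
    fix z show "v (Some z) \<in> {0..<1}" using spec[OF H, of "Some z"] by simp
  qed
  ultimately show ?thesis by blast
qed

lemma Bk_box: "Bk t \<subseteq> box01"
proof
  fix v assume v: "v \<in> Bk t"
  show "v \<in> box01" unfolding box01_def
  proof (intro CollectI allI)
    fix c show "0 \<le> v c \<and> v c < 1"
    proof (cases c)
      case None thus ?thesis using Bk_mem[OF v] amin_le1[of 1] by auto
    next
      case (Some z) thus ?thesis using Bk_mem[OF v] Jint_sub[of t z] by auto
    qed
  qed
qed

lemma Al_box: "Al k \<subseteq> box01"
proof
  fix v assume v: "v \<in> Al k"
  show "v \<in> box01" unfolding box01_def
  proof (intro CollectI allI)
    fix c show "0 \<le> v c \<and> v c < 1"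
    proof (cases c)
      case None thus ?thesis using Al_mem[OF v] amin_le1[of k] by auto
    next
      case (Some z) thus ?thesis using Al_mem[OF v] by auto
    qed
  qed
qed

lemma block_step:
  assumes w: "w \<in> adm" and r: "(w 0, yy) \<in> A ^^ (MM - t)" and t: "t < MM" and v: "v \<in> Bk t"
  shows "fhat p fb v w = nu t (w 0) \<and> (nu t (w 0), yy) \<in> A ^^ (MM - Suc t)"
proof -
  have "MM - t = Suc (MM - Suc t)" using t by simp
  hence "(w 0, yy) \<in> A ^^ Suc (MM - Suc t)" using r by simp
  hence "\<exists>g. (w 0, g) \<in> A \<and> (g, yy) \<in> A ^^ (MM - Suc t)" by (rule relpow_Suc_D2)
  hence nu: "(w 0, nu t (w 0)) \<in> A \<and> (nu t (w 0), yy) \<in> A ^^ (MM - Suc t)"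
    unfolding nu_def by (rule someI_ex)
  have gd: "good (w 0)" using w unfolding good_def by auto
  note L = LH[OF gd conjunct1[OF nu]]
  let ?lo = "fst (LH (w 0) (nu t (w 0)))" and ?hi = "snd (LH (w 0) (nu t (w 0)))"
  have vN: "v None < a" using Bk_mem[OF v] by auto
  have "v (Some (w 0)) \<in> Jint t (w 0)" using Bk_mem[OF v] by blast
  hence vS: "v (Some (w 0)) \<in> {?lo / a..<?hi / a}"
    using gd nu unfolding Jint_def by simp
  have ap: "0 < a" by (rule amin1_pos)
  have "a * v (Some (w 0)) \<in> {?lo..<?hi}"
  proof -
    have "?lo \<le> a * v (Some (w 0))" using vS ap by (simp add: pos_divide_le_eq mult.commute)
    moreover have "a * v (Some (w 0)) < ?hi" using vS ap by (simp add: pos_less_divide_eq mult.commute)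
    ultimately show ?thesis by simp
  qed
  hence "fb (a * v (Some (w 0))) w = nu t (w 0)" using L w by blast
  thus ?thesis using vN nu unfolding fhat_def by simp
qed

lemma push_0[simp]: "push x w 0 = x" by (simp add: push_def)
lemma push_Suc[simp]: "push x w (Suc j) = w j" by (simp add: push_def)

lemma traj_Suc0: "traj p fb vs w (Suc n) 0 = fhat p fb (vs n) (traj p fb vs w n)"
  by (simp add: push_def)

lemma traj_SucS: "traj p fb vs w (Suc n) (Suc i) = traj p fb vs w n i"
  by (simp add: push_def)

lemma block_phase:
  assumes w: "w \<in> adm" and B: "\<forall>i<MM. vs i \<in> Bk i"
  shows "n \<le> MM \<Longrightarrow> (traj p fb vs w n 0, yy) \<in> A ^^ (MM - n)"
proof (induction n)
  case 0 thus ?case using MM(2) by simp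
next
  case (Suc n)
  have "\<forall>i<n. vs i \<in> box01"
  proof (intro allI impI)
    fix i assume "i < n" hence "i < MM" using Suc.prems by simp
    thus "vs i \<in> box01" using B Bk_box by blast
  qed
  hence adm: "traj p fb vs w n \<in> adm" using w by (intro traj_adm)
  have "fhat p fb (vs n) (traj p fb vs w n) = nu n (traj p fb vs w n 0) \<and>
        (nu n (traj p fb vs w n 0), yy) \<in> A ^^ (MM - Suc n)"
    using Suc B by (intro block_step[OF adm]) auto
  thus ?case by (simp add: traj_Suc0)
qed

lemma coalesce:
  assumes w: "w \<in> adm" and w': "w' \<in> adm" and l: "MM \<le> Suc l"
    and B: "\<forall>i<MM. vs i \<in> Bk i" and AL: "\<forall>i. MM \<le> i \<and> i \<le> l \<longrightarrow> vs i \<in> Al (Suc i - MM)"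
  shows "fhat_iter p fb (Suc l) vs w = fhat_iter p fb (Suc l) vs w'"
proof -
  have box: "\<forall>i<Suc l. vs i \<in> box01"
  proof (intro allI impI)
    fix i assume "i < Suc l"
    show "vs i \<in> box01"
    proof (cases "i < MM")
      case True thus ?thesis using B Bk_box by blast
    next
      case False thus ?thesis using AL[rule_format, of i] Al_box \<open>i < Suc l\<close> by auto
    qed
  qed
  have y1: "traj p fb vs w MM 0 = yy" using block_phase[OF w B, of MM] by simp
  have y2: "traj p fb vs w' MM 0 = yy" using block_phase[OF w' B, of MM] by simp
  have main: "n \<le> Suc l \<Longrightarrow> (\<forall>i < Suc n - MM. traj p fb vs w n i = traj p fb vs w' n i)" if "MM \<le> n" for n
    using that
  proof (induction n rule: nat_induct_at_least)
    case base
    thus ?case using y1 y2 by simp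
  next
    case (Suc n)
    have nl: "n \<le> l" using Suc by simp
    have a1: "traj p fb vs w n \<in> adm" using w box nl by (intro traj_adm) auto
    have a2: "traj p fb vs w' n \<in> adm" using w' box nl by (intro traj_adm) auto
    have IH: "\<forall>i < Suc n - MM. traj p fb vs w n i = traj p fb vs w' n i" using Suc by simp
    have vn: "vs n \<in> Al (Suc n - MM)" using AL Suc nl by simp
    have "vs n None < amin p (Suc n - MM)" using Al_mem[OF vn] by auto
    hence eq: "fhat p fb (vs n) (traj p fb vs w n) = fhat p fb (vs n) (traj p fb vs w' n)"
      using Suc(1) box nl IH by (intro fhat_local[OF a1 a2]) auto
    show ?case
    proof (intro allI impI)
      fix i assume i: "i < Suc (Suc n) - MM"
      show "traj p fb vs w (Suc n) i = traj p fb vs w' (Suc n) i"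
      proof (cases i)
        case 0 thus ?thesis using eq by (simp add: traj_Suc0)
      next
        case (Suc j)
        hence "j < Suc n - MM" using i by simp
        thus ?thesis using IH Suc by (simp add: traj_SucS)
      qed
    qed
  qed
  have "traj p fb vs w (Suc l) 0 = traj p fb vs w' (Suc l) 0"
    using spec[OF main[OF l], of 0] l by (simp del: traj.simps)
  thus ?thesis unfolding fhat_iter_def by (simp add: traj_Suc0)
qed

definition Cset where "Cset m j = (if j < m then Al (m - j) else Bk (m + MM - 1 - j))"

lemma Bk_sets: "Bk t \<in> sets Vmeas"
  unfolding Bk_def by (rule box_sets) (auto split: option.split simp: Jint_def)

lemma Al_sets: "Al k \<in> sets Vmeas"
  unfolding Al_def by (rule box_sets) (auto split: option.split)

lemma Cset_sets: "Cset m j \<in> sets Vmeas"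
  unfolding Cset_def using Bk_sets Al_sets by auto

lemma Cset_shift: "b \<le> m \<Longrightarrow> Cset (m - b) j = Cset m (j + b)"
proof -
  assume b: "b \<le> m"
  have 1: "(j < m - b) = (j + b < m)" using b by arith
  have 2: "m - b - j = m - (j + b)" by simp
  have 3: "m - b + MM - 1 - j = m + MM - 1 - (j + b)" using b MM(1) by arith
  show ?thesis unfolding Cset_def 1 2 3 ..
qed

lemma munif1: "measure unif {0..<1::real} = 1" using measure_unif_Ico[of 0 1] by simp

lemma Al_measure: "measure Vmeas (Al k) = amin p k"
proof -
  have "measure Vmeas (Al k) = (\<Prod>c\<in>(UNIV::'g option set). measure unif (case c of None \<Rightarrow> {0..<amin p k} | Some z \<Rightarrow> {0..<1}))"
    unfolding Al_def by (rule box_measure[where F="\<lambda>c. case c of None \<Rightarrow> {0..<amin p k} | Some z \<Rightarrow> {0..<1}"]) (auto split: option.split)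
  also have "\<dots> = (\<Prod>c\<in>{None::'g option}. measure unif (case c of None \<Rightarrow> {0..<amin p k} | Some z \<Rightarrow> {0..<1::real}))"
    by (rule prod.mono_neutral_right) (auto simp: munif1 split: option.split)
  also have "\<dots> = amin p k" using amin_nonneg[of k] amin_le1[of k] by (simp add: measure_unif_Ico)
  finally show ?thesis .
qed

lemma Bk_measure_pos: "0 < measure Vmeas (Bk t)"
proof -
  have "measure Vmeas (Bk t) = (\<Prod>c\<in>UNIV. measure unif (case c of None \<Rightarrow> {0..<a} | Some z \<Rightarrow> Jint t z))"
    unfolding Bk_def by (rule box_measure) (auto split: option.split simp: Jint_def)
  also have "\<dots> > 0"
  proof (rule prod_pos)
    fix c :: "'g option"
    show "0 < measure unif (case c of None \<Rightarrow> {0..<a} | Some z \<Rightarrow> Jint t z)"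
    proof (cases c)
      case None thus ?thesis using amin1_pos amin_le1[of 1] by (simp add: measure_unif_Ico)
    next
      case (Some z)
      show ?thesis
      proof (cases "good z \<and> (z, nu t z) \<in> A")
        case True
        note L = LH[OF conjunct1[OF True] conjunct2[OF True]]
        let ?lo = "fst (LH z (nu t z))" and ?hi = "snd (LH z (nu t z))"
        have ap: "0 < a" by (rule amin1_pos)
        have h: "0 \<le> ?lo / a" "?lo / a \<le> ?hi / a" "?hi / a \<le> 1" "?lo / a < ?hi / a"
          using L ap by (auto simp: divide_strict_right_mono divide_right_mono)
        have "Jint t z = {?lo / a..<?hi / a}" using True unfolding Jint_def by simp
        hence "measure unif (Jint t z) = ?hi / a - ?lo / a" using measure_unif_Ico[OF h(1-3)] by simp
        thus ?thesis using Some h(4) by simp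
      next
        case False
        hence "Jint t z = {0..<1}" unfolding Jint_def if_not_P[OF False] by simp
        hence "measure unif (Jint t z) = 1" using measure_unif_Ico[of 0 1] by simp
        thus ?thesis using Some by simp
      qed
    qed
  qed
  finally show ?thesis .
qed

definition delta where "delta = (\<Prod>t<MM. measure Vmeas (Bk (MM - 1 - t)))"

lemma delta_pos: "0 < delta"
  unfolding delta_def by (rule prod_pos) (use Bk_measure_pos in auto)

lemma prod_split_nat: "(\<Prod>j<m+n. f j) = (\<Prod>j<m. f j) * (\<Prod>t<n. f (m+t)) " for f :: "nat \<Rightarrow> real"
  by (induction n) (auto simp: mult.assoc)

lemma sum_split_nat: "(\<Sum>j<m+n. f j) = (\<Sum>j<m. f j) + (\<Sum>t<n. f (m+t)) " for f :: "nat \<Rightarrow> real"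
  by (induction n) (auto simp: add.assoc)

lemma prod_rev: "(\<Prod>j<m. f (m - j)) = (\<Prod>i\<in>{1..m}. f i)" for f :: "nat \<Rightarrow> real"
  by (rule prod.reindex_bij_witness[of _ "\<lambda>i. m - i" "\<lambda>j. m - j"]) auto

definition gp where "gp n = (\<Prod>i\<in>{1..n}. amin p i)"

lemma E_measure: "(\<Prod>j<m+MM. measure Vmeas (Cset m j)) = gp m * delta"
proof -
  have "(\<Prod>j<m+MM. measure Vmeas (Cset m j)) =
        (\<Prod>j<m. measure Vmeas (Cset m j)) * (\<Prod>t<MM. measure Vmeas (Cset m (m+t)))"
    by (rule prod_split_nat)
  also have "(\<Prod>j<m. measure Vmeas (Cset m j)) = (\<Prod>j<m. amin p (m - j))"
    by (rule prod.cong) (auto simp: Cset_def Al_measure)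
  also have "\<dots> = gp m" unfolding gp_def by (rule prod_rev)
  also have "(\<Prod>t<MM. measure Vmeas (Cset m (m+t))) = delta"
    unfolding delta_def by (rule prod.cong) (auto simp: Cset_def)
  finally show ?thesis .
qed

lemma gp_nonneg: "0 \<le> gp n" unfolding gp_def by (rule prod_nonneg) (auto simp: amin_nonneg)

lemma gp_anti: "n \<le> n' \<Longrightarrow> gp n' \<le> gp n"
proof (rule lift_Suc_antimono_le[of gp])
  fix n
  have "gp (Suc n) = gp n * amin p (Suc n)" unfolding gp_def by (simp add: prod.nat_ivl_Suc')
  also have "\<dots> \<le> gp n * 1" using gp_nonneg amin_le1 by (intro mult_left_mono) auto
  finally show "gp (Suc n) \<le> gp n" by simp
qed

lemma block_sum: "(\<Sum>n<K*MM. gp n) \<le> MM * (\<Sum>k<K. gp (k*MM))"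
proof (induction K)
  case 0 thus ?case by simp
next
  case (Suc K)
  have "(\<Sum>n<Suc K*MM. gp n) = (\<Sum>n<K*MM. gp n) + (\<Sum>t<MM. gp (K*MM+t))"
    using sum_split_nat[of gp "K*MM" MM] by (simp add: add.commute)
  also have "(\<Sum>t<MM. gp (K*MM+t)) \<le> (\<Sum>t<MM. gp (K*MM))"
    by (rule sum_mono) (rule gp_anti, simp)
  also have "\<dots> = MM * gp (K*MM)" by simp
  finally show ?case using Suc.IH by (simp add: algebra_simps)
qed

lemma divergence: "\<exists>K. B < (\<Sum>k<K. \<Prod>j<k*MM+MM. measure Vmeas (Cset (k*MM) j))"
proof -
  have MMp: "(0::real) < MM" using MM(1) by simp
  obtain N where N: "MM * B / delta < (\<Sum>n\<in>{1..N}. gp n)"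
    using not_bounded_sums[of "MM * B / delta"] unfolding gp_def by (meson not_le)
  have "(\<Sum>n\<in>{1..N}. gp n) \<le> (\<Sum>n<Suc N * MM. gp n)"
  proof (rule sum_mono2)
    show "{1..N} \<subseteq> {..<Suc N * MM}"
    proof
      fix n assume "n \<in> {1..N}"
      hence "n < Suc N" by simp
      also have "Suc N * 1 \<le> Suc N * MM" by (rule mult_le_mono2) (use MM(1) in simp)
      finally show "n \<in> {..<Suc N * MM}" by simp
    qed
  qed (auto simp: gp_nonneg)
  also have "\<dots> \<le> MM * (\<Sum>k<Suc N. gp (k*MM))" by (rule block_sum)
  finally have "MM * B / delta < MM * (\<Sum>k<Suc N. gp (k*MM))" using N by linarith
  hence "real MM * (B / delta) < real MM * (\<Sum>k<Suc N. gp (k*MM))" by (simp only: times_divide_eq_right)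
  hence "B / delta < (\<Sum>k<Suc N. gp (k*MM))" using MMp by (simp only: mult_less_cancel_left_pos)
  hence "B < (\<Sum>k<Suc N. gp (k*MM)) * delta" using delta_pos by (simp add: pos_divide_less_eq)
  also have "\<dots> = (\<Sum>k<Suc N. \<Prod>j<k*MM+MM. measure Vmeas (Cset (k*MM) j))"
    by (simp only: E_measure sum_distrib_right)
  finally show ?thesis by blast
qed

definition Good :: "nat \<Rightarrow> (nat \<Rightarrow> 'g option \<Rightarrow> real) \<Rightarrow> bool" where
  "Good l \<omega> \<longleftrightarrow> MM \<le> Suc l \<and> (\<forall>j<Suc l. \<omega> j \<in> Cset (Suc l - MM) j)"

definition TT :: "(nat \<Rightarrow> 'g option \<Rightarrow> real) \<Rightarrow> enat" where
  "TT \<omega> = (if \<exists>l. Good l \<omega> then enat (LEAST l. Good l \<omega>) else \<infinity>)"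

lemma TT_le: "TT \<omega> \<le> enat n \<longleftrightarrow> (\<exists>l\<le>n. Good l \<omega>)"
proof
  assume h: "TT \<omega> \<le> enat n"
  show "\<exists>l\<le>n. Good l \<omega>"
  proof (cases "\<exists>l. Good l \<omega>")
    case True
    hence "TT \<omega> = enat (LEAST l. Good l \<omega>)" unfolding TT_def by simp
    hence "(LEAST l. Good l \<omega>) \<le> n" using h by simp
    moreover have "Good (LEAST l. Good l \<omega>) \<omega>" using True by (rule LeastI_ex)
    ultimately show ?thesis by blast
  next
    case False thus ?thesis using h unfolding TT_def by simp
  qed
next
  assume "\<exists>l\<le>n. Good l \<omega>"
  then obtain l where l: "l \<le> n" "Good l \<omega>" by blast
  hence "(LEAST l. Good l \<omega>) \<le> l" by (intro Least_le)
  thus "TT \<omega> \<le> enat n" using l unfolding TT_def by auto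
qed

lemma TT_eq: "TT \<omega> = enat l \<Longrightarrow> Good l \<omega>"
proof -
  assume h: "TT \<omega> = enat l"
  have ex: "\<exists>l. Good l \<omega>" using h unfolding TT_def by (auto split: if_splits)
  hence "(LEAST l. Good l \<omega>) = l" using h unfolding TT_def by simp
  thus ?thesis using LeastI_ex[OF ex] by simp
qed

lemma stopping: "{\<omega> \<in> space Omega. TT \<omega> \<le> enat n} \<in> sets (past_filt n)"
proof -
  let ?P = "PiM {..n} (\<lambda>_. Vmeas) :: (nat \<Rightarrow> 'g option \<Rightarrow> real) measure"
  define X where "X = (\<Union>l\<in>{..n}. {x \<in> space ?P. Good l x})"
  have Xl: "{x \<in> space ?P. Good l x} \<in> sets ?P" if "l \<le> n" for l
  proof (cases "MM \<le> Suc l")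
    case True
    have "{x \<in> space ?P. Good l x} = prod_emb {..n} (\<lambda>_. Vmeas) {..<Suc l} (PiE {..<Suc l} (Cset (Suc l - MM)))"
      unfolding Good_def prod_emb_def using True by (auto simp: space_PiM PiE_iff extensional_def)
    also have "\<dots> \<in> sets ?P" using that by (intro sets_PiM_I) (auto simp: Cset_sets)
    finally show ?thesis .
  next
    case False
    hence "{x \<in> space ?P. Good l x} = {}" unfolding Good_def by auto
    thus ?thesis by (simp only: sets.empty_sets)
  qed
  have Xs: "X \<in> sets ?P" unfolding X_def using Xl by (intro sets.finite_UN) auto
  have eq: "{\<omega> \<in> space Omega. TT \<omega> \<le> enat n} = (\<lambda>\<omega>. restrict \<omega> {..n}) -` X \<inter> space Omega"
  proof -
    have gr: "Good l (restrict \<omega> {..n}) = Good l \<omega>" if "l \<le> n" for l \<omega>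
      unfolding Good_def using that by auto
    have sp: "restrict \<omega> {..n} \<in> space ?P" for \<omega> :: "nat \<Rightarrow> 'g option \<Rightarrow> real"
      by (simp add: space_PiM)
    show ?thesis unfolding X_def TT_le using gr sp by auto
  qed
  show ?thesis unfolding past_filt_def eq by (rule in_vimage_algebra[OF Xs])
qed

lemma AE_fin: "AE \<omega> in Omega. TT \<omega> \<noteq> \<infinity>"
proof -
  interpret Q: sequence_space "Vmeas :: ('g option \<Rightarrow> real) measure" by (rule seq_Vmeas)
  have "AE \<omega> in Q.S. \<exists>m. \<forall>j<m+MM. \<omega> j \<in> Cset m j"
    by (rule Q.renewal[OF Cset_sets Cset_shift MM(1) divergence])
  hence ae: "AE \<omega> in Omega. \<exists>m. \<forall>j<m+MM. \<omega> j \<in> Cset m j" unfolding Omega_def .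
  show ?thesis using ae
  proof (rule AE_mp)
    show "AE \<omega> in Omega. (\<exists>m. \<forall>j<m+MM. \<omega> j \<in> Cset m j) \<longrightarrow> TT \<omega> \<noteq> \<infinity>"
    proof (rule AE_I2, rule impI)
      fix \<omega> :: "nat \<Rightarrow> 'g option \<Rightarrow> real"
      assume "\<exists>m. \<forall>j<m+MM. \<omega> j \<in> Cset m j"
      then obtain m where m: "\<forall>j<m+MM. \<omega> j \<in> Cset m j" by blast
      have e1: "Suc (m + MM - 1) = m + MM" using MM(1) by simp
      have "Good (m + MM - 1) \<omega>" unfolding Good_def e1 using m by simp
      thus "TT \<omega> \<noteq> \<infinity>" unfolding TT_def by auto
    qed
  qed
qed

lemma coal_T:
  assumes T: "TT \<omega> = enat l" and w: "w \<in> adm"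
  shows "fhat_iter p fb (Suc l) (\<lambda>i. \<omega> (l - i)) w = fhat_iter p fb (Suc l) (\<lambda>i. \<omega> (l - i)) gg"
proof -
  have G: "Good l \<omega>" using T by (rule TT_eq)
  have l: "MM \<le> Suc l" using G unfolding Good_def by simp
  have Gj: "\<And>j. j < Suc l \<Longrightarrow> \<omega> j \<in> Cset (Suc l - MM) j" using G unfolding Good_def by simp
  show ?thesis
  proof (rule coalesce[OF w gg_adm l])
    show "\<forall>i<MM. \<omega> (l - i) \<in> Bk i"
    proof (intro allI impI)
      fix i assume i: "i < MM"
      have 1: "l - i < Suc l" by simp
      have 2: "\<not> (l - i < Suc l - MM)" using i l by arith
      have 3: "Suc l - MM + MM - 1 - (l - i) = i" using i l by arith
      show "\<omega> (l - i) \<in> Bk i" using Gj[OF 1] 2 3 unfolding Cset_def by simp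
    qed
    show "\<forall>i. MM \<le> i \<and> i \<le> l \<longrightarrow> \<omega> (l - i) \<in> Al (Suc i - MM)"
    proof (intro allI impI)
      fix i assume i: "MM \<le> i \<and> i \<le> l"
      have 1: "l - i < Suc l" by simp
      have 2: "l - i < Suc l - MM" using i l by arith
      have 3: "Suc l - MM - (l - i) = Suc i - MM" using i l by arith
      show "\<omega> (l - i) \<in> Al (Suc i - MM)" using Gj[OF 1] 2 3 unfolding Cset_def by simp
    qed
  qed
qed

lemma main: "\<exists>T. backward_coalescence_time p fb gg T"
  unfolding backward_coalescence_time_def
  using stopping AE_fin coal_T by blast

end

theorem corollary2:
  fixes p :: "'g::finite \<Rightarrow> (nat \<Rightarrow> 'g) \<Rightarrow> real"
    and fb :: "real \<Rightarrow> (nat \<Rightarrow> 'g) \<Rightarrow> 'g"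
    and gg :: "nat \<Rightarrow> 'g"
  assumes p_nonneg: "\<And>g w. 0 \<le> p g w"
    and p_le1: "\<And>g w. p g w \<le> 1"
    and p_sum: "\<And>w. (\<Sum>g\<in>UNIV. p g w) = 1"
    and p_meas: "\<And>g. (\<lambda>w. p g w) \<in> borel_measurable (PiM UNIV (\<lambda>_::nat. count_space (UNIV :: 'g set)))"
    and gg_adm: "gg \<in> admissible p"
    and fb: "fbar_ok p fb"
    and cond_i: "filterlim (\<lambda>N. \<Sum>n\<in>{1..N}. \<Prod>m\<in>{1..n}. amin p m) at_top sequentially"
    and cond_ii: "\<exists>C. irreducible_class (arcs p) C \<and> aperiodic_class (arcs p) C
                     \<and> (\<forall>C'. irreducible_class (arcs p) C' \<longrightarrow> C' = C)"
    and cond_iii: "\<forall>g. \<exists>w. (w, g) \<notin> arcs p"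
  shows "\<exists>T. backward_coalescence_time p fb gg T"
  by (rule cor2.main[OF cor2.intro[OF p_nonneg p_le1 p_sum gg_adm fb cond_i cond_ii]])

end
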